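(* For every instance of MCND that has a feasible solution and every partial aggregation $\mathcal{B}$ (see context), the optimal values of the LP relaxations of the PA, PAi and PAe formulations built on $\mathcal{B}$ are each lower bounds on the optimal value of MCND.
   Context: An instance of MCND consists of a directed graph $G=(\mathcal{N},\mathcal{A})$, a finite set $\mathcal{K}$ of commodities, each $k\in\mathcal{K}$ having an origin $o^k\in\mathcal{N}$, a destination $s^k\in\mathcal{N}$ and a demand $d^k\ge 0$, and for each arc $(i,j)\in\mathcal{A}$ a capacity $u_{ij}$, a per-unit flow cost $c_{ij}$ and a fixed cost $f_{ij}$, all nonnegative. Let $o_i^k=1$ if $i=o^k$ and $0$ otherwise, $s_i^k=1$ if $i=s^k$ and $0$ otherwise, $\mathcal{N}_i^+=\{j:(i,j)\in\mathcal{A}\}$, $\mathcal{N}_i^-=\{j:(j,i)\in\mathcal{A}\}$. MCND: minimize $\sum_{k}\sum_{(i,j)}c_{ij}x_{ij}^k+\sum_{(i,j)}f_{ij}y_{ij}$ over $x_{ij}^k\ge0$, $y_{ij}\in\{0,1\}$, subject to $\sum_{j\in\mathcal{N}_i^+}x_{ij}^k-\sum_{j\in\mathcal{N}_i^-}x_{ji}^k=(o_i^k-s_i^k)d^k$ for all $k,i$; $\sum_k x_{ij}^k\le u_{ij}y_{ij}$ for all $(i,j)$; $x_{ij}^k\le d^k y_{ij}$ for all $k,(i,j)$. Dispersion: a nonempty set $\mathcal{K}_b\subseteq\mathcal{K}$ of commodities sharing a common origin, together with, for every arc $(i,j)\in\mathcal{A}$, a partition of $\mathcal{K}_b$ into $\mathcal{K}_b^{ij}$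 (aggregated on $(i,j)$) and $\mathcal{D}_b^{ij}$ (disaggregated on $(i,j)$); either part may be empty. Let $\mathcal{G}_b^{ij}$ be the family consisting of the set $\mathcal{K}_b^{ij}$ (if nonempty) together with the singletons $\{k\}$, $k\in\mathcal{D}_b^{ij}$. A partial aggregation is a set $\mathcal{B}$ of dispersions such that every $k\in\mathcal{K}$ lies in $\mathcal{K}_b$ for exactly one $b\in\mathcal{B}$. LP relaxation of PA (for $\mathcal{B}$): variables $x_{ij}^D\ge0$ for $(i,j)\in\mathcal{A}$, $b\in\mathcal{B}$, $D\in\mathcal{G}_b^{ij}$ (since the $\mathcal{K}_b$ are disjoint, $D$ determines $b$), and $0\le y_{ij}\le1$; minimize $\sum_{(i,j)}c_{ij}\sum_{b}\sum_{D\in\mathcal{G}_b^{ij}}x_{ij}^D+\sum_{(i,j)}f_{ij}y_{ij}$ subject to: for all $b\in\mathcal{B}$, $i\in\mathcal{N}$: $\sum_{j\in\mathcal{N}_i^+}\sum_{D\in\mathcal{G}_b^{ij}}x_{ij}^D-\sum_{j\in\mathcal{N}_i^-}\sum_{D\in\mathcal{G}_b^{ji}}x_{ji}^D=\sum_{k\in\mathcal{K}_b}(o_i^k-s_i^k)d^k$; for all $(i,j)$: $\sum_b\sum_{D\in\mathcal{G}_b^{ij}}x_{ij}^D\le u_{ij}y_{ij}$; for all $(i,j),b,D\in\mathcal{G}_b^{ij}$: $x_{ij}^D\le(\sum_{k\in D}d^k)y_{ij}$. LP relaxation of PAi: the PA LP plus, for all $b\in\mathcal{B}$, $k\in\mathcal{K}_b$,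 $i\in\mathcal{N}$: $\sum_{j\in\mathcal{N}_i^+}\sum_{D\in\mathcal{G}_b^{ij}:k\in D}x_{ij}^D-\sum_{j\in\mathcal{N}_i^-}\sum_{D\in\mathcal{G}_b^{ji}:D=\{k\}}x_{ji}^D\ge(o_i^k-s_i^k)d^k$ and $\sum_{j\in\mathcal{N}_i^+}\sum_{D\in\mathcal{G}_b^{ij}:D=\{k\}}x_{ij}^D-\sum_{j\in\mathcal{N}_i^-}\sum_{D\in\mathcal{G}_b^{ji}:k\in D}x_{ji}^D\le(o_i^k-s_i^k)d^k$. LP relaxation of PAe: the PA LP plus the following. For $b\in\mathcal{B}$, $i\in\mathcal{N}$ let $\mathcal{L}_b^i=\{k\in\mathcal{K}_b:k\in\mathcal{D}_b^{ji}\text{ for some }j\in\mathcal{N}_i^-\text{ or }k\in\mathcal{D}_b^{ij}\text{ for some }j\in\mathcal{N}_i^+\}$; $\mathcal{M}_b^i=\{\{k\}:k\in\mathcal{L}_b^i\}\cup\{\mathcal{K}_b\setminus\mathcal{L}_b^i\}$ (the last set only if nonempty); $\check{\mathcal{T}}_b^i$ = the set of distinct nonempty sets among $\{\mathcal{K}_b^{ji}:j\in\mathcal{N}_i^-\}$; $\hat{\mathcal{T}}_b^i$ = the set of distinct nonempty sets among $\{\mathcal{K}_b^{ij}:j\in\mathcal{N}_i^+\}$. For every $(b,i)$ with $\mathcal{L}_b^i\neq\emptyset$ add variables $z_{CD}^{ib}\ge0$ for $C\in\check{\mathcal{T}}_b^i$, $D\in\mathcal{M}_b^i$ with $C\cap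 D\ne\emptyset$, and $z_{DC}^{ib}\ge0$ for $D\in\mathcal{M}_b^i$, $C\in\hat{\mathcal{T}}_b^i$ with $C\cap D\neq\emptyset$ (zero cost), and constraints: for each $D\in\mathcal{M}_b^i$: $\sum_{j\in\mathcal{N}_i^+:\,D=\{k\},k\in\mathcal{D}_b^{ij}}x_{ij}^{D}-\sum_{j\in\mathcal{N}_i^-:\,D=\{k\},k\in\mathcal{D}_b^{ji}}x_{ji}^{D}+\sum_{C\in\hat{\mathcal{T}}_b^i:C\cap D\neq\emptyset}z_{DC}^{ib}-\sum_{C\in\check{\mathcal{T}}_b^i:C\cap D\ne\emptyset}z_{CD}^{ib}=\sum_{k\in D}(o_i^k-s_i^k)d^k$; for each $C\in\check{\mathcal{T}}_b^i$: $\sum_{D\in\mathcal{M}_b^i:C\cap D\ne\emptyset}z_{CD}^{ib}-\sum_{j\in\mathcal{N}_i^-:\mathcal{K}_b^{ji}=C}x_{ji}^C=0$; for each $C\in\hat{\mathcal{T}}_b^i$: $\sum_{j\in\mathcal{N}_i^+:\mathcal{K}_b^{ij}=C}x_{ij}^C-\sum_{D\in\mathcal{M}_b^i:C\cap D\neq\emptyset}z_{DC}^{ib}=0$. The objective is that of PA. *)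

theory Defs
  imports Complex_Main
begin

record ('n, 'k) mcnd =
  nodes :: "'n set"
  arcs  :: "('n \<times> 'n) set"
  comms :: "'k set"
  orig  :: "'k \<Rightarrow> 'n"
  dest  :: "'k \<Rightarrow> 'n"
  dem   :: "'k \<Rightarrow> real"
  cap   :: "'n \<times> 'n \<Rightarrow> real"
  ucost :: "'n \<times> 'n \<Rightarrow> real"
  fcost :: "'n \<times> 'n \<Rightarrow> real"

definition wf_instance :: "('n, 'k) mcnd \<Rightarrow> bool" where
  "wf_instance I \<longleftrightarrow> finite (nodes I) \<and> finite (comms I) \<and> arcs I \<subseteq> nodes I \<times> nodes I
     \<and> (\<forall>k\<in>comms I. orig I k \<in> nodes I \<and> dest I k \<in> nodes I \<and> dem I k \<ge> 0)
     \<and> (\<forall>a\<in>arcs I. cap I a \<ge> 0 \<and> ucost I a \<ge> 0 \<and> fcost I a \<ge> 0)"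

definition outN :: "('n, 'k) mcnd \<Rightarrow> 'n \<Rightarrow> 'n set" where
  "outN I i = {j. (i, j) \<in> arcs I}"

definition inN :: "('n, 'k) mcnd \<Rightarrow> 'n \<Rightarrow> 'n set" where
  "inN I i = {j. (j, i) \<in> arcs I}"

definition rhs :: "('n, 'k) mcnd \<Rightarrow> 'k \<Rightarrow> 'n \<Rightarrow> real" where
  "rhs I k i = ((if i = orig I k then 1 else 0) - (if i = dest I k then 1 else 0)) * dem I k"

definition mcnd_feasible :: "('n, 'k) mcnd \<Rightarrow> ('k \<Rightarrow> 'n \<times> 'n \<Rightarrow> real) \<Rightarrow> ('n \<times> 'n \<Rightarrow> real) \<Rightarrow> bool" where
  "mcnd_feasible I x y \<longleftrightarrow>
     (\<forall>k\<in>comms I. \<forall>a\<in>arcs I. x k a \<ge> 0)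
   \<and> (\<forall>a\<in>arcs I. y a \<in> {0, 1})
   \<and> (\<forall>k\<in>comms I. \<forall>i\<in>nodes I.
        (\<Sum>j\<in>outN I i. x k (i, j)) - (\<Sum>j\<in>inN I i. x k (j, i)) = rhs I k i)
   \<and> (\<forall>a\<in>arcs I. (\<Sum>k\<in>comms I. x k a) \<le> cap I a * y a)
   \<and> (\<forall>k\<in>comms I. \<forall>a\<in>arcs I. x k a \<le> dem I k * y a)"

definition mcnd_cost :: "('n, 'k) mcnd \<Rightarrow> ('k \<Rightarrow> 'n \<times> 'n \<Rightarrow> real) \<Rightarrow> ('n \<times> 'n \<Rightarrow> real) \<Rightarrow> real" where
  "mcnd_cost I x y = (\<Sum>a\<in>arcs I. ucost I a * (\<Sum>k\<in>comms I. x k a)) + (\<Sum>a\<in>arcs I. fcost I a * y a)"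

definition mcnd_opt :: "('n, 'k) mcnd \<Rightarrow> real" where
  "mcnd_opt I = Inf {mcnd_cost I x y | x y. mcnd_feasible I x y}"

text \<open>A dispersion is a pair (K_b, agg) where agg a = K_b^{a} is the set of commodities
  aggregated on arc a; the disaggregated ones are K_b - agg a.\<close>
type_synonym ('n, 'k) dispersion = "'k set \<times> ('n \<times> 'n \<Rightarrow> 'k set)"

definition is_dispersion :: "('n, 'k) mcnd \<Rightarrow> ('n, 'k) dispersion \<Rightarrow> bool" where
  "is_dispersion I b \<longleftrightarrow> fst b \<noteq> {} \<and> fst b \<subseteq> comms I
     \<and> (\<exists>v. \<forall>k\<in>fst b. orig I k = v)
     \<and> (\<forall>a\<in>arcs I. snd b a \<subseteq> fst b)"

definition partial_aggregation :: "('n, 'k) mcnd \<Rightarrow> ('n, 'k) dispersion set \<Rightarrow> bool" where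
  "partial_aggregation I B \<longleftrightarrow> (\<forall>b\<in>B. is_dispersion I b) \<and> (\<forall>k\<in>comms I. \<exists>!b. b \<in> B \<and> k \<in> fst b)"

definition disagg :: "('n, 'k) dispersion \<Rightarrow> 'n \<times> 'n \<Rightarrow> 'k set" where
  "disagg b a = fst b - snd b a"

definition Gfam :: "('n, 'k) dispersion \<Rightarrow> 'n \<times> 'n \<Rightarrow> 'k set set" where
  "Gfam b a = (if snd b a = {} then {} else {snd b a}) \<union> (\<lambda>k. {k}) ` disagg b a"

definition flowb :: "('n, 'k) dispersion \<Rightarrow> 'n \<times> 'n \<Rightarrow> ('n \<times> 'n \<Rightarrow> 'k set \<Rightarrow> real) \<Rightarrow> real" where
  "flowb b a x = (\<Sum>D\<in>Gfam b a. x a D)"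

definition pa_feasible :: "('n, 'k) mcnd \<Rightarrow> ('n, 'k) dispersion set
    \<Rightarrow> ('n \<times> 'n \<Rightarrow> 'k set \<Rightarrow> real) \<Rightarrow> ('n \<times> 'n \<Rightarrow> real) \<Rightarrow> bool" where
  "pa_feasible I B x y \<longleftrightarrow>
     (\<forall>a\<in>arcs I. 0 \<le> y a \<and> y a \<le> 1)
   \<and> (\<forall>a\<in>arcs I. \<forall>b\<in>B. \<forall>D\<in>Gfam b a. x a D \<ge> 0)
   \<and> (\<forall>b\<in>B. \<forall>i\<in>nodes I.
        (\<Sum>j\<in>outN I i. flowb b (i, j) x) - (\<Sum>j\<in>inN I i. flowb b (j, i) x)
          = (\<Sum>k\<in>fst b. rhs I k i))
   \<and> (\<forall>a\<in>arcs I. (\<Sum>b\<in>B. flowb b a x) \<le> cap I a * y a)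
   \<and> (\<forall>a\<in>arcs I. \<forall>b\<in>B. \<forall>D\<in>Gfam b a. x a D \<le> (\<Sum>k\<in>D. dem I k) * y a)"

definition pa_obj :: "('n, 'k) mcnd \<Rightarrow> ('n, 'k) dispersion set
    \<Rightarrow> ('n \<times> 'n \<Rightarrow> 'k set \<Rightarrow> real) \<Rightarrow> ('n \<times> 'n \<Rightarrow> real) \<Rightarrow> real" where
  "pa_obj I B x y = (\<Sum>a\<in>arcs I. ucost I a * (\<Sum>b\<in>B. flowb b a x)) + (\<Sum>a\<in>arcs I. fcost I a * y a)"

definition pa_lp_opt :: "('n, 'k) mcnd \<Rightarrow> ('n, 'k) dispersion set \<Rightarrow> real" where
  "pa_lp_opt I B = Inf {pa_obj I B x y | x y. pa_feasible I B x y}"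

definition pai_feasible :: "('n, 'k) mcnd \<Rightarrow> ('n, 'k) dispersion set
    \<Rightarrow> ('n \<times> 'n \<Rightarrow> 'k set \<Rightarrow> real) \<Rightarrow> ('n \<times> 'n \<Rightarrow> real) \<Rightarrow> bool" where
  "pai_feasible I B x y \<longleftrightarrow> pa_feasible I B x y
   \<and> (\<forall>b\<in>B. \<forall>k\<in>fst b. \<forall>i\<in>nodes I.
        (\<Sum>j\<in>outN I i. \<Sum>D\<in>{D\<in>Gfam b (i, j). k \<in> D}. x (i, j) D)
        - (\<Sum>j\<in>inN I i. \<Sum>D\<in>{D\<in>Gfam b (j, i). D = {k}}. x (j, i) D) \<ge> rhs I k i
      \<and> (\<Sum>j\<in>outN I i. \<Sum>D\<in>{D\<in>Gfam b (i, j). D = {k}}. x (i, j) D)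
        - (\<Sum>j\<in>inN I i. \<Sum>D\<in>{D\<in>Gfam b (j, i). k \<in> D}. x (j, i) D) \<le> rhs I k i)"

definition pai_lp_opt :: "('n, 'k) mcnd \<Rightarrow> ('n, 'k) dispersion set \<Rightarrow> real" where
  "pai_lp_opt I B = Inf {pa_obj I B x y | x y. pai_feasible I B x y}"

definition Lset :: "('n, 'k) mcnd \<Rightarrow> ('n, 'k) dispersion \<Rightarrow> 'n \<Rightarrow> 'k set" where
  "Lset I b i = {k\<in>fst b. (\<exists>j\<in>inN I i. k \<in> disagg b (j, i)) \<or> (\<exists>j\<in>outN I i. k \<in> disagg b (i, j))}"

definition Mset :: "('n, 'k) mcnd \<Rightarrow> ('n, 'k) dispersion \<Rightarrow> 'n \<Rightarrow> 'k set set" where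
  "Mset I b i = (\<lambda>k. {k}) ` Lset I b i
     \<union> (if fst b - Lset I b i = {} then {} else {fst b - Lset I b i})"

definition Tin :: "('n, 'k) mcnd \<Rightarrow> ('n, 'k) dispersion \<Rightarrow> 'n \<Rightarrow> 'k set set" where
  "Tin I b i = {snd b (j, i) | j. j \<in> inN I i \<and> snd b (j, i) \<noteq> {}}"

definition Tout :: "('n, 'k) mcnd \<Rightarrow> ('n, 'k) dispersion \<Rightarrow> 'n \<Rightarrow> 'k set set" where
  "Tout I b i = {snd b (i, j) | j. j \<in> outN I i \<and> snd b (i, j) \<noteq> {}}"

text \<open>zin i b C D stands for z_{CD}^{ib} (C in Tin), zout i b D C for z_{DC}^{ib} (C in Tout).\<close>
definition pae_feasible :: "('n, 'k) mcnd \<Rightarrow> ('n, 'k) dispersion set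
    \<Rightarrow> ('n \<times> 'n \<Rightarrow> 'k set \<Rightarrow> real) \<Rightarrow> ('n \<times> 'n \<Rightarrow> real) \<Rightarrow> bool" where
  "pae_feasible I B x y \<longleftrightarrow> pa_feasible I B x y \<and>
   (\<exists>(zin :: 'n \<Rightarrow> ('n, 'k) dispersion \<Rightarrow> 'k set \<Rightarrow> 'k set \<Rightarrow> real)
     (zout :: 'n \<Rightarrow> ('n, 'k) dispersion \<Rightarrow> 'k set \<Rightarrow> 'k set \<Rightarrow> real).
     \<forall>b\<in>B. \<forall>i\<in>nodes I. Lset I b i \<noteq> {} \<longrightarrow>
       (\<forall>C\<in>Tin I b i. \<forall>D\<in>Mset I b i. C \<inter> D \<noteq> {} \<longrightarrow> zin i b C D \<ge> 0)
     \<and> (\<forall>D\<in>Mset I b i. \<forall>C\<in>Tout I b i. C \<inter> D \<noteq> {} \<longrightarrow> zout i b D C \<ge> 0)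
     \<and> (\<forall>D\<in>Mset I b i.
          (\<Sum>j\<in>{j\<in>outN I i. \<exists>k. D = {k} \<and> k \<in> disagg b (i, j)}. x (i, j) D)
        - (\<Sum>j\<in>{j\<in>inN I i. \<exists>k. D = {k} \<and> k \<in> disagg b (j, i)}. x (j, i) D)
        + (\<Sum>C\<in>{C\<in>Tout I b i. C \<inter> D \<noteq> {}}. zout i b D C)
        - (\<Sum>C\<in>{C\<in>Tin I b i. C \<inter> D \<noteq> {}}. zin i b C D)
        = (\<Sum>k\<in>D. rhs I k i))
     \<and> (\<forall>C\<in>Tin I b i.
          (\<Sum>D\<in>{D\<in>Mset I b i. C \<inter> D \<noteq> {}}. zin i b C D)
        - (\<Sum>j\<in>{j\<in>inN I i. snd b (j, i) = C}. x (j, i) C) = 0)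
     \<and> (\<forall>C\<in>Tout I b i.
          (\<Sum>j\<in>{j\<in>outN I i. snd b (i, j) = C}. x (i, j) C)
        - (\<Sum>D\<in>{D\<in>Mset I b i. C \<inter> D \<noteq> {}}. zout i b D C) = 0))"

definition pae_lp_opt :: "('n, 'k) mcnd \<Rightarrow> ('n, 'k) dispersion set \<Rightarrow> real" where
  "pae_lp_opt I B = Inf {pa_obj I B x y | x y. pae_feasible I B x y}"

end

theory Submission
  imports Defs
begin


lemma Gfam_sum:
  assumes "finite (fst b)" "snd b a \<subseteq> fst b"
  shows "(\<Sum>D\<in>Gfam b a. sum f D) = sum f (fst b)"
proof -
  have fin: "finite (Gfam b a)" using assms(1) by (simp add: Gfam_def disagg_def)
  have sub: "\<forall>D\<in>Gfam b a. finite D"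
    using assms by (auto simp: Gfam_def disagg_def intro: finite_subset)
  have dj: "\<forall>A\<in>Gfam b a. \<forall>B\<in>Gfam b a. A \<noteq> B \<longrightarrow> A \<inter> B = {}"
    by (auto simp: Gfam_def disagg_def pairwise_def disjnt_def)
  have un: "\<Union>(Gfam b a) = fst b" using assms(2)
    by (auto simp: Gfam_def disagg_def)
  show ?thesis using sum.Union_disjoint[OF sub dj, of f] un by (simp add: o_def)
qed

lemma Mset_sum:
  assumes "finite (fst b)"
  shows "(\<Sum>D\<in>Mset I b i. sum f D) = sum f (fst b)"
proof -
  have L: "Lset I b i \<subseteq> fst b" by (auto simp: Lset_def)
  have fin: "finite (Mset I b i)" using assms L by (auto simp: Mset_def intro: finite_subset)
  have sub: "\<forall>D\<in>Mset I b i. finite D"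
    using assms by (auto simp: Mset_def)
  have dj: "\<forall>A\<in>Mset I b i. \<forall>B\<in>Mset I b i. A \<noteq> B \<longrightarrow> A \<inter> B = {}"
    by (auto simp: Mset_def pairwise_def disjnt_def)
  have un: "\<Union>(Mset I b i) = fst b" using L
    by (auto simp: Mset_def)
  show ?thesis using sum.Union_disjoint[OF sub dj, of f] un by (simp add: o_def)
qed

lemma Mset_sum_C:
  assumes "finite (fst b)" "C \<subseteq> fst b"
  shows "(\<Sum>D\<in>{D\<in>Mset I b i. C \<inter> D \<noteq> {}}. sum f (C \<inter> D)) = sum f C"
proof -
  have L: "Lset I b i \<subseteq> fst b" by (auto simp: Lset_def)
  have fin: "finite (Mset I b i)" using assms L by (auto simp: Mset_def intro: finite_subset)
  have fD: "\<forall>D\<in>Mset I b i. finite D"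
    using assms by (auto simp: Mset_def)
  have "(\<Sum>D\<in>{D\<in>Mset I b i. C \<inter> D \<noteq> {}}. sum f (C \<inter> D)) = (\<Sum>D\<in>Mset I b i. sum f (C \<inter> D))"
    by (rule sum.mono_neutral_left) (use fin in auto)
  also have "\<dots> = (\<Sum>D\<in>Mset I b i. sum (\<lambda>k. if k \<in> C then f k else 0) D)"
    by (rule sum.cong) (use fD in \<open>auto simp: sum.inter_restrict Int_commute\<close>)
  also have "\<dots> = sum (\<lambda>k. if k \<in> C then f k else 0) (fst b)"
    by (rule Mset_sum[OF assms(1)])
  also have "\<dots> = sum f C" using assms
    by (simp add: sum.inter_restrict[symmetric] Int_absorb1)
  finally show ?thesis .
qed



lemma finite_outN: "wf_instance I \<Longrightarrow> finite (outN I i)"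
proof -
  assume w: "wf_instance I"
  have "outN I i \<subseteq> snd ` arcs I" by (force simp: outN_def)
  moreover have "finite (arcs I)" using w unfolding wf_instance_def
    by (meson finite_SigmaI finite_subset)
  ultimately show ?thesis by (meson finite_imageI finite_subset)
qed

lemma finite_inN: "wf_instance I \<Longrightarrow> finite (inN I i)"
proof -
  assume w: "wf_instance I"
  have "inN I i \<subseteq> fst ` arcs I" by (force simp: inN_def)
  moreover have "finite (arcs I)" using w unfolding wf_instance_def
    by (meson finite_SigmaI finite_subset)
  ultimately show ?thesis by (meson finite_imageI finite_subset)
qed

lemma finite_arcs: "wf_instance I \<Longrightarrow> finite (arcs I)"
  unfolding wf_instance_def by (meson finite_SigmaI finite_subset)

lemma PA_facts:
  assumes w: "wf_instance I" and p: "partial_aggregation I B"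
  shows "finite B" and "\<And>b. b \<in> B \<Longrightarrow> fst b \<subseteq> comms I"
    and "\<And>b. b \<in> B \<Longrightarrow> finite (fst b)"
    and "\<And>b a. b \<in> B \<Longrightarrow> a \<in> arcs I \<Longrightarrow> snd b a \<subseteq> fst b"
    and "\<And>b b'. b \<in> B \<Longrightarrow> b' \<in> B \<Longrightarrow> b \<noteq> b' \<Longrightarrow> fst b \<inter> fst b' = {}"
    and "\<Union>(fst ` B) = comms I"
proof -
  have disp: "\<And>b. b \<in> B \<Longrightarrow> is_dispersion I b" using p by (simp add: partial_aggregation_def)
  have uq: "\<And>k. k \<in> comms I \<Longrightarrow> \<exists>!b. b \<in> B \<and> k \<in> fst b" using p by (simp add: partial_aggregation_def)
  show sub: "\<And>b. b \<in> B \<Longrightarrow> fst b \<subseteq> comms I" using disp by (simp add: is_dispersion_def)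
  have fc: "finite (comms I)" using w by (simp add: wf_instance_def)
  show "\<And>b. b \<in> B \<Longrightarrow> finite (fst b)" using sub fc finite_subset by blast
  show "\<And>b a. b \<in> B \<Longrightarrow> a \<in> arcs I \<Longrightarrow> snd b a \<subseteq> fst b" using disp by (simp add: is_dispersion_def)
  show dj: "\<And>b b'. b \<in> B \<Longrightarrow> b' \<in> B \<Longrightarrow> b \<noteq> b' \<Longrightarrow> fst b \<inter> fst b' = {}"
  proof -
    fix b b' assume bb: "b \<in> B" "b' \<in> B" "b \<noteq> b'"
    show "fst b \<inter> fst b' = {}"
    proof (rule ccontr)
      assume "fst b \<inter> fst b' \<noteq> {}"
      then obtain k where k: "k \<in> fst b" "k \<in> fst b'" by blast
      then have "k \<in> comms I" using sub bb by blast
      then have "\<exists>!b. b \<in> B \<and> k \<in> fst b" by (rule uq)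
      then show False using k bb by blast
    qed
  qed
  show "\<Union>(fst ` B) = comms I"
  proof
    show "\<Union>(fst ` B) \<subseteq> comms I" using sub by blast
    show "comms I \<subseteq> \<Union>(fst ` B)"
    proof
      fix k assume "k \<in> comms I"
      then obtain b where "b \<in> B" "k \<in> fst b" using uq by blast
      then show "k \<in> \<Union>(fst ` B)" by blast
    qed
  qed
  have ne: "\<And>b. b \<in> B \<Longrightarrow> fst b \<noteq> {}" using disp by (simp add: is_dispersion_def)
  have "inj_on fst B"
  proof (rule inj_onI)
    fix b b' assume "b \<in> B" "b' \<in> B" "fst b = fst b'"
    then show "b = b'" using dj ne by fastforce
  qed
  moreover have "finite (fst ` B)"
    using sub fc by (meson Pow_iff finite_Pow_iff finite_subset image_subsetI)
  ultimately show "finite B" using finite_imageD by blast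
qed



definition xagg :: "('k \<Rightarrow> 'n \<times> 'n \<Rightarrow> real) \<Rightarrow> 'n \<times> 'n \<Rightarrow> 'k set \<Rightarrow> real" where
  "xagg x a D = (\<Sum>k\<in>D. x k a)"


definition zinf :: "('k \<Rightarrow> 'n \<times> 'n \<Rightarrow> real) \<Rightarrow> ('n, 'k) mcnd \<Rightarrow> 'n \<Rightarrow> ('n, 'k) dispersion \<Rightarrow> 'k set \<Rightarrow> 'k set \<Rightarrow> real" where
  "zinf x I i b C D = (\<Sum>j\<in>{j\<in>inN I i. snd b (j, i) = C}. \<Sum>k\<in>C \<inter> D. x k (j, i))"

definition zoutf :: "('k \<Rightarrow> 'n \<times> 'n \<Rightarrow> real) \<Rightarrow> ('n, 'k) mcnd \<Rightarrow> 'n \<Rightarrow> ('n, 'k) dispersion \<Rightarrow> 'k set \<Rightarrow> 'k set \<Rightarrow> real" where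
  "zoutf x I i b D C = (\<Sum>j\<in>{j\<in>outN I i. snd b (i, j) = C}. \<Sum>k\<in>C \<inter> D. x k (i, j))"

context
  fixes I :: "('n, 'k) mcnd" and B :: "('n, 'k) dispersion set" and x y
  assumes w: "wf_instance I" and p: "partial_aggregation I B" and f: "mcnd_feasible I x y"
begin

lemma fB: "finite B" and sub: "\<And>b. b \<in> B \<Longrightarrow> fst b \<subseteq> comms I"
    and fb: "\<And>b. b \<in> B \<Longrightarrow> finite (fst b)"
    and sna: "\<And>b a. b \<in> B \<Longrightarrow> a \<in> arcs I \<Longrightarrow> snd b a \<subseteq> fst b"
    and djB: "\<And>b b'. b \<in> B \<Longrightarrow> b' \<in> B \<Longrightarrow> b \<noteq> b' \<Longrightarrow> fst b \<inter> fst b' = {}"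
    and unB: "\<Union>(fst ` B) = comms I"
  using PA_facts[OF w p] by auto

lemma xnn: "k \<in> comms I \<Longrightarrow> a \<in> arcs I \<Longrightarrow> x k a \<ge> 0"
  using f by (simp add: mcnd_feasible_def)
lemma ybin: "a \<in> arcs I \<Longrightarrow> y a \<in> {0,1}"
  using f by (simp add: mcnd_feasible_def)
lemma cons: "k \<in> comms I \<Longrightarrow> i \<in> nodes I \<Longrightarrow>
        (\<Sum>j\<in>outN I i. x k (i, j)) - (\<Sum>j\<in>inN I i. x k (j, i)) = rhs I k i"
  using f by (simp add: mcnd_feasible_def)
lemma capc: "a \<in> arcs I \<Longrightarrow> (\<Sum>k\<in>comms I. x k a) \<le> cap I a * y a"
  using f by (simp add: mcnd_feasible_def)
lemma demc: "k \<in> comms I \<Longrightarrow> a \<in> arcs I \<Longrightarrow> x k a \<le> dem I k * y a"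
  using f by (simp add: mcnd_feasible_def)

lemma flowb_eq: "b \<in> B \<Longrightarrow> a \<in> arcs I \<Longrightarrow> flowb b a (xagg x) = (\<Sum>k\<in>fst b. x k a)"
  unfolding flowb_def xagg_def by (rule Gfam_sum[OF fb sna])

lemma Gsub: "b \<in> B \<Longrightarrow> a \<in> arcs I \<Longrightarrow> D \<in> Gfam b a \<Longrightarrow> D \<subseteq> fst b"
  using sna[of b a] by (auto simp: Gfam_def disagg_def split: if_splits)

lemma sumB: "a \<in> arcs I \<Longrightarrow> (\<Sum>b\<in>B. flowb b a (xagg x)) = (\<Sum>k\<in>comms I. x k a)"
proof -
  assume a: "a \<in> arcs I"
  have "(\<Sum>b\<in>B. flowb b a (xagg x)) = (\<Sum>b\<in>B. \<Sum>k\<in>fst b. x k a)"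
    using a flowb_eq by simp
  also have "\<dots> = (\<Sum>k\<in>\<Union>(fst ` B). x k a)"
    by (rule sum.UNION_disjoint[symmetric]) (use fB fb djB in auto)
  finally show ?thesis using unB by simp
qed

lemma outarc: "j \<in> outN I i \<Longrightarrow> (i, j) \<in> arcs I" by (simp add: outN_def)
lemma inarc: "j \<in> inN I i \<Longrightarrow> (j, i) \<in> arcs I" by (simp add: inN_def)

lemma pa_feas: "pa_feasible I B (xagg x) y"
  unfolding pa_feasible_def
proof (intro conjI ballI)
  fix a assume a: "a \<in> arcs I"
  show "0 \<le> y a" "y a \<le> 1" using ybin[OF a] by auto
  show "(\<Sum>b\<in>B. flowb b a (xagg x)) \<le> cap I a * y a" using sumB[OF a] capc[OF a] by simp
  fix b D assume b: "b \<in> B" and D: "D \<in> Gfam b a"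
  have DC: "D \<subseteq> comms I" using Gsub[OF b a D] sub[OF b] by blast
  show "xagg x a D \<ge> 0" unfolding xagg_def
    by (rule sum_nonneg) (use DC xnn a in blast)
  show "xagg x a D \<le> (\<Sum>k\<in>D. dem I k) * y a" unfolding xagg_def sum_distrib_right
    by (rule sum_mono) (use DC demc a in blast)
next
  fix b i assume b: "b \<in> B" and i: "i \<in> nodes I"
  have "(\<Sum>j\<in>outN I i. flowb b (i, j) (xagg x)) - (\<Sum>j\<in>inN I i. flowb b (j, i) (xagg x))
     = (\<Sum>j\<in>outN I i. \<Sum>k\<in>fst b. x k (i, j)) - (\<Sum>j\<in>inN I i. \<Sum>k\<in>fst b. x k (j, i))"
    using flowb_eq[OF b] outarc inarc by simp
  also have "\<dots> = (\<Sum>k\<in>fst b. (\<Sum>j\<in>outN I i. x k (i, j)) - (\<Sum>j\<in>inN I i. x k (j, i)))"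
    by (simp add: sum_subtractf sum.swap[of _ "outN I i"] sum.swap[of _ "inN I i"])
  also have "\<dots> = (\<Sum>k\<in>fst b. rhs I k i)"
    by (rule sum.cong) (use cons i sub[OF b] in blast)+
  finally show "(\<Sum>j\<in>outN I i. flowb b (i, j) (xagg x)) - (\<Sum>j\<in>inN I i. flowb b (j, i) (xagg x))
     = (\<Sum>k\<in>fst b. rhs I k i)" .
qed


lemma ge1: assumes b: "b \<in> B" and a: "a \<in> arcs I" and k: "k \<in> fst b"
  shows "x k a \<le> (\<Sum>D\<in>{D\<in>Gfam b a. k \<in> D}. xagg x a D)"
proof -
  have fG: "finite (Gfam b a)" using fb[OF b] by (simp add: Gfam_def disagg_def)
  obtain D0 where D0: "D0 \<in> Gfam b a" "k \<in> D0"
  proof (cases "k \<in> snd b a")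
    case True
    then have "snd b a \<in> Gfam b a" by (auto simp: Gfam_def)
    then show ?thesis using that True by blast
  next
    case False then show ?thesis using that k by (auto simp: Gfam_def disagg_def)
  qed
  have nn: "\<And>D. D \<in> Gfam b a \<Longrightarrow> xagg x a D \<ge> 0"
    unfolding xagg_def using Gsub[OF b a] sub[OF b] xnn a by (meson subsetD sum_nonneg)
  have "x k a \<le> xagg x a D0" unfolding xagg_def
    by (rule member_le_sum) (use D0 Gsub[OF b a] sub[OF b] xnn[OF _ a] fb[OF b] in \<open>blast intro: finite_subset\<close>)+
  also have "\<dots> \<le> (\<Sum>D\<in>{D\<in>Gfam b a. k \<in> D}. xagg x a D)"
    by (rule member_le_sum) (use D0 nn fG in auto)
  finally show ?thesis .
qed

lemma le1: assumes b: "b \<in> B" and a: "a \<in> arcs I" and k: "k \<in> fst b"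
  shows "(\<Sum>D\<in>{D\<in>Gfam b a. D = {k}}. xagg x a D) \<le> x k a"
proof -
  have "{D\<in>Gfam b a. D = {k}} = (if {k} \<in> Gfam b a then {{k}} else {})" by auto
  moreover have "0 \<le> x k a" using xnn[OF _ a, of k] sub[OF b] k by blast
  ultimately show ?thesis by (simp add: xagg_def)
qed

lemma pai_feas: "pai_feasible I B (xagg x) y"
  unfolding pai_feasible_def
proof (intro conjI ballI pa_feas)
  fix b k i assume b: "b \<in> B" and k: "k \<in> fst b" and i: "i \<in> nodes I"
  have kc: "k \<in> comms I" using sub[OF b] k by blast
  have "rhs I k i = (\<Sum>j\<in>outN I i. x k (i, j)) - (\<Sum>j\<in>inN I i. x k (j, i))"
    using cons[OF kc i] by simp
  also have "\<dots> \<le> (\<Sum>j\<in>outN I i. \<Sum>D\<in>{D\<in>Gfam b (i, j). k \<in> D}. xagg x (i, j) D)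
        - (\<Sum>j\<in>inN I i. \<Sum>D\<in>{D\<in>Gfam b (j, i). D = {k}}. xagg x (j, i) D)"
    by (intro diff_mono sum_mono ge1[OF b _ k] le1[OF b _ k] outarc inarc)
  finally show "(\<Sum>j\<in>outN I i. \<Sum>D\<in>{D\<in>Gfam b (i, j). k \<in> D}. xagg x (i, j) D)
        - (\<Sum>j\<in>inN I i. \<Sum>D\<in>{D\<in>Gfam b (j, i). D = {k}}. xagg x (j, i) D) \<ge> rhs I k i" .
  have "(\<Sum>j\<in>outN I i. \<Sum>D\<in>{D\<in>Gfam b (i, j). D = {k}}. xagg x (i, j) D)
        - (\<Sum>j\<in>inN I i. \<Sum>D\<in>{D\<in>Gfam b (j, i). k \<in> D}. xagg x (j, i) D)
       \<le> (\<Sum>j\<in>outN I i. x k (i, j)) - (\<Sum>j\<in>inN I i. x k (j, i))"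
    by (intro diff_mono sum_mono ge1[OF b _ k] le1[OF b _ k] outarc inarc)
  also have "\<dots> = rhs I k i" using cons[OF kc i] by simp
  finally show "(\<Sum>j\<in>outN I i. \<Sum>D\<in>{D\<in>Gfam b (i, j). D = {k}}. xagg x (i, j) D)
        - (\<Sum>j\<in>inN I i. \<Sum>D\<in>{D\<in>Gfam b (j, i). k \<in> D}. xagg x (j, i) D) \<le> rhs I k i" .
qed


lemma Msub: "b \<in> B \<Longrightarrow> D \<in> Mset I b i \<Longrightarrow> D \<subseteq> fst b"
  by (auto simp: Mset_def Lset_def split: if_splits)

lemma zout_group: assumes b: "b \<in> B" and Ds: "D \<subseteq> fst b"
  shows "(\<Sum>C\<in>{C\<in>Tout I b i. C \<inter> D \<noteq> {}}. zoutf x I i b D C)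
       = (\<Sum>j\<in>outN I i. \<Sum>k\<in>snd b (i, j) \<inter> D. x k (i, j))"
proof -
  let ?g = "\<lambda>j. snd b (i, j)"
  let ?S = "{j\<in>outN I i. snd b (i, j) \<noteq> {}}"
  let ?h = "\<lambda>j. \<Sum>k\<in>snd b (i, j) \<inter> D. x k (i, j)"
  have fo: "finite (outN I i)" by (rule finite_outN[OF w])
  have fS: "finite ?S" using fo by simp
  have T: "Tout I b i = ?g ` ?S" by (auto simp: Tout_def)
  have fT: "finite (Tout I b i)" using T fS by simp
  have "(\<Sum>C\<in>{C\<in>Tout I b i. C \<inter> D \<noteq> {}}. zoutf x I i b D C) = (\<Sum>C\<in>Tout I b i. zoutf x I i b D C)"
    by (rule sum.mono_neutral_left) (use fT in \<open>auto simp: zoutf_def\<close>)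
  also have "\<dots> = (\<Sum>C\<in>?g ` ?S. sum ?h {j. j \<in> ?S \<and> ?g j = C})"
    unfolding T zoutf_def
    by (rule sum.cong[OF refl], rule sum.cong) auto
  also have "\<dots> = sum ?h ?S" by (rule sum.image_gen[symmetric, OF fS])
  also have "\<dots> = sum ?h (outN I i)"
    by (rule sum.mono_neutral_left) (use fo in auto)
  finally show ?thesis .
qed

lemma zin_group: assumes b: "b \<in> B" and Ds: "D \<subseteq> fst b"
  shows "(\<Sum>C\<in>{C\<in>Tin I b i. C \<inter> D \<noteq> {}}. zinf x I i b C D)
       = (\<Sum>j\<in>inN I i. \<Sum>k\<in>snd b (j, i) \<inter> D. x k (j, i))"
proof -
  let ?g = "\<lambda>j. snd b (j, i)"
  let ?S = "{j\<in>inN I i. snd b (j, i) \<noteq> {}}"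
  let ?h = "\<lambda>j. \<Sum>k\<in>snd b (j, i) \<inter> D. x k (j, i)"
  have fo: "finite (inN I i)" by (rule finite_inN[OF w])
  have fS: "finite ?S" using fo by simp
  have T: "Tin I b i = ?g ` ?S" by (auto simp: Tin_def)
  have fT: "finite (Tin I b i)" using T fS by simp
  have "(\<Sum>C\<in>{C\<in>Tin I b i. C \<inter> D \<noteq> {}}. zinf x I i b C D) = (\<Sum>C\<in>Tin I b i. zinf x I i b C D)"
    by (rule sum.mono_neutral_left) (use fT in \<open>auto simp: zinf_def\<close>)
  also have "\<dots> = (\<Sum>C\<in>?g ` ?S. sum ?h {j. j \<in> ?S \<and> ?g j = C})"
    unfolding T zinf_def
    by (rule sum.cong[OF refl], rule sum.cong) auto
  also have "\<dots> = sum ?h ?S" by (rule sum.image_gen[symmetric, OF fS])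
  also have "\<dots> = sum ?h (inN I i)"
    by (rule sum.mono_neutral_left) (use fo in auto)
  finally show ?thesis .
qed

lemma dis_out: assumes b: "b \<in> B" and D: "D \<in> Mset I b i"
  shows "(\<Sum>j\<in>{j\<in>outN I i. \<exists>k. D = {k} \<and> k \<in> disagg b (i, j)}. xagg x (i, j) D)
       = (\<Sum>j\<in>outN I i. \<Sum>k\<in>D \<inter> disagg b (i, j). x k (i, j))"
proof -
  have fo: "finite (outN I i)" by (rule finite_outN[OF w])
  show ?thesis unfolding sum.inter_filter[OF fo]
  proof (rule sum.cong[OF refl])
    fix j assume j: "j \<in> outN I i"
    show "(if \<exists>k. D = {k} \<and> k \<in> disagg b (i, j) then xagg x (i, j) D else 0)
        = (\<Sum>k\<in>D \<inter> disagg b (i, j). x k (i, j))"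
    proof (cases "\<exists>k. D = {k} \<and> k \<in> disagg b (i, j)")
      case True
      then obtain k where "D = {k}" "k \<in> disagg b (i, j)" by blast
      then show ?thesis by (simp add: xagg_def)
    next
      case False
      have "D \<inter> disagg b (i, j) = {}"
      proof (rule ccontr)
        assume "D \<inter> disagg b (i, j) \<noteq> {}"
        then obtain k where k: "k \<in> D" "k \<in> disagg b (i, j)" by blast
        then have kL: "k \<in> Lset I b i" using j by (auto simp: Lset_def disagg_def)
        from D show False
          unfolding Mset_def
        proof (elim UnE)
          assume "D \<in> (\<lambda>k. {k}) ` Lset I b i"
          then obtain k0 where "D = {k0}" by blast
          then show False using False k by blast
        next
          assume "D \<in> (if fst b - Lset I b i = {} then {} else {fst b - Lset I b i})"
          then have "D = fst b - Lset I b i" by (simp split: if_splits)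
          then show False using k kL by blast
        qed
      qed
      then show ?thesis using False by (simp only: if_False sum.empty)
    qed
  qed
qed

lemma dis_in: assumes b: "b \<in> B" and D: "D \<in> Mset I b i"
  shows "(\<Sum>j\<in>{j\<in>inN I i. \<exists>k. D = {k} \<and> k \<in> disagg b (j, i)}. xagg x (j, i) D)
       = (\<Sum>j\<in>inN I i. \<Sum>k\<in>D \<inter> disagg b (j, i). x k (j, i))"
proof -
  have fo: "finite (inN I i)" by (rule finite_inN[OF w])
  show ?thesis unfolding sum.inter_filter[OF fo]
  proof (rule sum.cong[OF refl])
    fix j assume j: "j \<in> inN I i"
    show "(if \<exists>k. D = {k} \<and> k \<in> disagg b (j, i) then xagg x (j, i) D else 0)
        = (\<Sum>k\<in>D \<inter> disagg b (j, i). x k (j, i))"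
    proof (cases "\<exists>k. D = {k} \<and> k \<in> disagg b (j, i)")
      case True
      then obtain k where "D = {k}" "k \<in> disagg b (j, i)" by blast
      then show ?thesis by (simp add: xagg_def)
    next
      case False
      have "D \<inter> disagg b (j, i) = {}"
      proof (rule ccontr)
        assume "D \<inter> disagg b (j, i) \<noteq> {}"
        then obtain k where k: "k \<in> D" "k \<in> disagg b (j, i)" by blast
        then have kL: "k \<in> Lset I b i" using j by (auto simp: Lset_def disagg_def)
        from D show False
          unfolding Mset_def
        proof (elim UnE)
          assume "D \<in> (\<lambda>k. {k}) ` Lset I b i"
          then obtain k0 where "D = {k0}" by blast
          then show False using False k by blast
        next
          assume "D \<in> (if fst b - Lset I b i = {} then {} else {fst b - Lset I b i})"
          then have "D = fst b - Lset I b i" by (simp split: if_splits)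
          then show False using k kL by blast
        qed
      qed
      then show ?thesis using False by (simp only: if_False sum.empty)
    qed
  qed
qed

lemma split_D: assumes b: "b \<in> B" and a: "a \<in> arcs I" and Ds: "D \<subseteq> fst b"
  shows "(\<Sum>k\<in>D \<inter> disagg b a. x k a) + (\<Sum>k\<in>snd b a \<inter> D. x k a) = (\<Sum>k\<in>D. x k a)"
proof -
  have fD: "finite D" using fb[OF b] Ds finite_subset by blast
  have "D = (D \<inter> disagg b a) \<union> (snd b a \<inter> D)" using Ds sna[OF b a] by (auto simp: disagg_def)
  moreover have "(D \<inter> disagg b a) \<inter> (snd b a \<inter> D) = {}" by (auto simp: disagg_def)
  ultimately show ?thesis using fD
    by (metis finite_Int inf_commute sum.union_disjoint)
qed


lemma pae_feas: "pae_feasible I B (xagg x) y"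
  unfolding pae_feasible_def
proof (intro conjI pa_feas, rule exI[of _ "zinf x I"], rule exI[of _ "zoutf x I"], rule ballI, rule ballI, rule impI, intro conjI)
  fix b i assume b: "b \<in> B" and i: "i \<in> nodes I"
  have fo: "finite (outN I i)" by (rule finite_outN[OF w])
  have fi: "finite (inN I i)" by (rule finite_inN[OF w])
  show "\<forall>C\<in>Tin I b i. \<forall>D\<in>Mset I b i. C \<inter> D \<noteq> {} \<longrightarrow> zinf x I i b C D \<ge> 0"
    unfolding zinf_def
  proof (intro sum_nonneg ballI impI)
    fix C D j k assume j: "j \<in> {j \<in> inN I i. snd b (j, i) = C}" and k: "k \<in> C \<inter> D"
    have "k \<in> comms I" using j k sna[OF b inarc] sub[OF b] by blast
    then show "0 \<le> x k (j, i)" using xnn inarc j by blast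
  qed
  show "\<forall>D\<in>Mset I b i. \<forall>C\<in>Tout I b i. C \<inter> D \<noteq> {} \<longrightarrow> zoutf x I i b D C \<ge> 0"
    unfolding zoutf_def
  proof (intro sum_nonneg ballI impI)
    fix D C j k assume j: "j \<in> {j \<in> outN I i. snd b (i, j) = C}" and k: "k \<in> C \<inter> D"
    have "k \<in> comms I" using j k sna[OF b outarc] sub[OF b] by blast
    then show "0 \<le> x k (i, j)" using xnn outarc j by blast
  qed
  show "\<forall>D\<in>Mset I b i.
          (\<Sum>j\<in>{j\<in>outN I i. \<exists>k. D = {k} \<and> k \<in> disagg b (i, j)}. xagg x (i, j) D)
        - (\<Sum>j\<in>{j\<in>inN I i. \<exists>k. D = {k} \<and> k \<in> disagg b (j, i)}. xagg x (j, i) D)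
        + (\<Sum>C\<in>{C\<in>Tout I b i. C \<inter> D \<noteq> {}}. zoutf x I i b D C)
        - (\<Sum>C\<in>{C\<in>Tin I b i. C \<inter> D \<noteq> {}}. zinf x I i b C D)
        = (\<Sum>k\<in>D. rhs I k i)"
  proof
    fix D assume D: "D \<in> Mset I b i"
    have Ds: "D \<subseteq> fst b" by (rule Msub[OF b D])
    have o: "(\<Sum>j\<in>{j\<in>outN I i. \<exists>k. D = {k} \<and> k \<in> disagg b (i, j)}. xagg x (i, j) D)
        + (\<Sum>C\<in>{C\<in>Tout I b i. C \<inter> D \<noteq> {}}. zoutf x I i b D C)
        = (\<Sum>j\<in>outN I i. \<Sum>k\<in>D. x k (i, j))"
      unfolding dis_out[OF b D] zout_group[OF b Ds] sum.distrib[symmetric]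
      by (rule sum.cong[OF refl], rule split_D[OF b outarc Ds])
    have n: "(\<Sum>j\<in>{j\<in>inN I i. \<exists>k. D = {k} \<and> k \<in> disagg b (j, i)}. xagg x (j, i) D)
        + (\<Sum>C\<in>{C\<in>Tin I b i. C \<inter> D \<noteq> {}}. zinf x I i b C D)
        = (\<Sum>j\<in>inN I i. \<Sum>k\<in>D. x k (j, i))"
      unfolding dis_in[OF b D] zin_group[OF b Ds] sum.distrib[symmetric]
      by (rule sum.cong[OF refl], rule split_D[OF b inarc Ds])
    have "(\<Sum>j\<in>outN I i. \<Sum>k\<in>D. x k (i, j)) - (\<Sum>j\<in>inN I i. \<Sum>k\<in>D. x k (j, i))
        = (\<Sum>k\<in>D. (\<Sum>j\<in>outN I i. x k (i, j)) - (\<Sum>j\<in>inN I i. x k (j, i)))"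
      by (simp add: sum_subtractf sum.swap[of _ "outN I i"] sum.swap[of _ "inN I i"])
    also have "\<dots> = (\<Sum>k\<in>D. rhs I k i)"
      by (rule sum.cong) (use cons i sub[OF b] Ds in blast)+
    finally show "(\<Sum>j\<in>{j\<in>outN I i. \<exists>k. D = {k} \<and> k \<in> disagg b (i, j)}. xagg x (i, j) D)
        - (\<Sum>j\<in>{j\<in>inN I i. \<exists>k. D = {k} \<and> k \<in> disagg b (j, i)}. xagg x (j, i) D)
        + (\<Sum>C\<in>{C\<in>Tout I b i. C \<inter> D \<noteq> {}}. zoutf x I i b D C)
        - (\<Sum>C\<in>{C\<in>Tin I b i. C \<inter> D \<noteq> {}}. zinf x I i b C D)
        = (\<Sum>k\<in>D. rhs I k i)" using o n by linarith
  qed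
  show "\<forall>C\<in>Tin I b i.
          (\<Sum>D\<in>{D\<in>Mset I b i. C \<inter> D \<noteq> {}}. zinf x I i b C D)
        - (\<Sum>j\<in>{j\<in>inN I i. snd b (j, i) = C}. xagg x (j, i) C) = 0"
  proof
    fix C assume C: "C \<in> Tin I b i"
    then obtain j0 where "j0 \<in> inN I i" "C = snd b (j0, i)" by (auto simp: Tin_def)
    then have Cs: "C \<subseteq> fst b" using sna[OF b inarc] by blast
    have "(\<Sum>D\<in>{D\<in>Mset I b i. C \<inter> D \<noteq> {}}. zinf x I i b C D)
       = (\<Sum>j\<in>{j\<in>inN I i. snd b (j, i) = C}. \<Sum>D\<in>{D\<in>Mset I b i. C \<inter> D \<noteq> {}}. \<Sum>k\<in>C \<inter> D. x k (j, i))"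
      unfolding zinf_def by (rule sum.swap)
    also have "\<dots> = (\<Sum>j\<in>{j\<in>inN I i. snd b (j, i) = C}. xagg x (j, i) C)"
      unfolding xagg_def by (rule sum.cong[OF refl], rule Mset_sum_C[OF fb[OF b] Cs])
    finally show "(\<Sum>D\<in>{D\<in>Mset I b i. C \<inter> D \<noteq> {}}. zinf x I i b C D)
        - (\<Sum>j\<in>{j\<in>inN I i. snd b (j, i) = C}. xagg x (j, i) C) = 0" by simp
  qed
  show "\<forall>C\<in>Tout I b i.
          (\<Sum>j\<in>{j\<in>outN I i. snd b (i, j) = C}. xagg x (i, j) C)
        - (\<Sum>D\<in>{D\<in>Mset I b i. C \<inter> D \<noteq> {}}. zoutf x I i b D C) = 0"
  proof
    fix C assume C: "C \<in> Tout I b i"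
    then obtain j0 where "j0 \<in> outN I i" "C = snd b (i, j0)" by (auto simp: Tout_def)
    then have Cs: "C \<subseteq> fst b" using sna[OF b outarc] by blast
    have "(\<Sum>D\<in>{D\<in>Mset I b i. C \<inter> D \<noteq> {}}. zoutf x I i b D C)
       = (\<Sum>j\<in>{j\<in>outN I i. snd b (i, j) = C}. \<Sum>D\<in>{D\<in>Mset I b i. C \<inter> D \<noteq> {}}. \<Sum>k\<in>C \<inter> D. x k (i, j))"
      unfolding zoutf_def by (rule sum.swap)
    also have "\<dots> = (\<Sum>j\<in>{j\<in>outN I i. snd b (i, j) = C}. xagg x (i, j) C)"
      unfolding xagg_def by (rule sum.cong[OF refl], rule Mset_sum_C[OF fb[OF b] Cs])
    finally show "(\<Sum>j\<in>{j\<in>outN I i. snd b (i, j) = C}. xagg x (i, j) C)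
        - (\<Sum>D\<in>{D\<in>Mset I b i. C \<inter> D \<noteq> {}}. zoutf x I i b D C) = 0" by simp
  qed
qed

lemma obj_eq: "pa_obj I B (xagg x) y = mcnd_cost I x y"
  unfolding pa_obj_def mcnd_cost_def using sumB by simp

end


lemma pa_obj_nonneg:
  assumes w: "wf_instance I" and pf: "pa_feasible I B x y"
  shows "pa_obj I B x y \<ge> 0"
proof -
  have "\<And>a. a \<in> arcs I \<Longrightarrow> 0 \<le> ucost I a * (\<Sum>b\<in>B. flowb b a x)"
  proof -
    fix a assume a: "a \<in> arcs I"
    have "0 \<le> ucost I a" using w a by (simp add: wf_instance_def)
    moreover have "0 \<le> (\<Sum>b\<in>B. flowb b a x)"
      using pf a unfolding pa_feasible_def flowb_def by (meson sum_nonneg)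
    ultimately show "0 \<le> ucost I a * (\<Sum>b\<in>B. flowb b a x)" by simp
  qed
  moreover have "\<And>a. a \<in> arcs I \<Longrightarrow> 0 \<le> fcost I a * y a"
    using w pf by (simp add: wf_instance_def pa_feasible_def)
  ultimately show ?thesis unfolding pa_obj_def by (simp add: sum_nonneg)
qed

lemma bound_generic:
  assumes ne: "\<exists>x y. mcnd_feasible I x y"
    and tr: "\<And>x y. mcnd_feasible I x y \<Longrightarrow> \<exists>x' y'. P x' y' \<and> pa_obj I B x' y' = mcnd_cost I x y"
    and nn: "\<And>x y. P x y \<Longrightarrow> pa_obj I B x y \<ge> 0"
  shows "Inf {pa_obj I B x y | x y. P x y} \<le> mcnd_opt I"
  unfolding mcnd_opt_def
proof (rule cInf_greatest)
  show "{mcnd_cost I x y |x y. mcnd_feasible I x y} \<noteq> {}" using ne by blast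
  fix c assume "c \<in> {mcnd_cost I x y |x y. mcnd_feasible I x y}"
  then obtain x y where f: "mcnd_feasible I x y" and c: "c = mcnd_cost I x y" by blast
  obtain x' y' where "P x' y'" "pa_obj I B x' y' = c" using tr[OF f] c by blast
  then have m: "c \<in> {pa_obj I B x y | x y. P x y}" by blast
  have "bdd_below {pa_obj I B x y | x y. P x y}"
    by (rule bdd_belowI[of _ 0]) (use nn in blast)
  then show "Inf {pa_obj I B x y | x y. P x y} \<le> c" using m by (rule cInf_lower[rotated])
qed

theorem corollary1:
  fixes I :: "('n, 'k) mcnd" and B :: "('n, 'k) dispersion set"
  assumes "wf_instance I"
    and "\<exists>x y. mcnd_feasible I x y"
    and "partial_aggregation I B"
  shows "pa_lp_opt I B \<le> mcnd_opt I \<and> pai_lp_opt I B \<le> mcnd_opt I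
         \<and> pae_lp_opt I B \<le> mcnd_opt I"
proof (intro conjI)
  show "pa_lp_opt I B \<le> mcnd_opt I" unfolding pa_lp_opt_def
    by (rule bound_generic[OF assms(2)])
       (use pa_feas[OF assms(1,3)] obj_eq[OF assms(1,3)] pa_obj_nonneg[OF assms(1)] in blast)+
  show "pai_lp_opt I B \<le> mcnd_opt I" unfolding pai_lp_opt_def
    by (rule bound_generic[OF assms(2)])
       (use pai_feas[OF assms(1,3)] obj_eq[OF assms(1,3)] pa_obj_nonneg[OF assms(1)] in
         \<open>blast intro: pa_obj_nonneg[OF assms(1)] dest: pai_feasible_def[THEN iffD1, THEN conjunct1]\<close>)+
  show "pae_lp_opt I B \<le> mcnd_opt I" unfolding pae_lp_opt_def
    by (rule bound_generic[OF assms(2)])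
       (use pae_feas[OF assms(1,3)] obj_eq[OF assms(1,3)] pa_obj_nonneg[OF assms(1)] in
         \<open>blast intro: pa_obj_nonneg[OF assms(1)] dest: pae_feasible_def[THEN iffD1, THEN conjunct1]\<close>)+
qed

end
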